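(* Let $A\in\mathbb{R}^{N\times N}$ be symmetric positive definite, $b\in\mathbb{R}^N$, $x_0\in\mathbb{R}^N$ with $r_0=b-Ax_0\neq0$, and let $n$ be the grade of $r_0$ with respect to $A$. Run the conjugate gradient method (exact arithmetic): $p_0=r_0$ and, for $k=1,2,\dots$, $$\gamma_{k-1}=\frac{r_{k-1}^Tr_{k-1}}{p_{k-1}^TAp_{k-1}},\quad x_k=x_{k-1}+\gamma_{k-1}p_{k-1},\quad r_k=r_{k-1}-\gamma_{k-1}Ap_{k-1},\quad \delta_k=\frac{r_k^Tr_k}{r_{k-1}^Tr_{k-1}},\quad p_k=r_k+\delta_kp_{k-1}.$$ For $1\le k\le n$ let $L_k^T$ be the $k\times k$ upper bidiagonal matrix with diagonal entries $1/\sqrt{\gamma_{j-1}}$, $j=1,\dots,k$, and superdiagonal entries $\sqrt{\delta_j/\gamma_{j-1}}$, $j=1,\dots,k-1$, let $T_k=L_kL_k^T$, and define $\xi_k=\|r_0\|^2e_1^TT_k^{-2}e_1$ (with $e_1$ the first column of the $k\times k$ identity), and $\xi_0=0$. Let $\psi_i=\gamma_i\|r_i\|^2$, and let $\phi_0=1$, $\phi_k=\phi_{k-1}/(\phi_{k-1}+\delta_k)$ for $k\ge1$. Then $$\xi_k=\sum_{j=0}^{k-1}\|r_j\|^{-2}\Big(\sum_{i=j}^{k-1}\psi_i\Big)^2,$$ and $\xi_{k+1}$, $k=0,1,2,\dots$ (with $k+1\le n$), can be computed by the recurrences $$\vartheta_{k+1}=\vartheta_k+\gamma_k\phi_k^{-1},\qquad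 \xi_{k+1}=\xi_k+\psi_k(\vartheta_{k+1}+\vartheta_k),$$ where $\vartheta_0=0$ and $\xi_0=0$.
   Context: $\|\cdot\|$ is the Euclidean norm. The grade $n$ of $r_0$ with respect to $A$ is the maximal dimension of the Krylov subspaces $\mathrm{span}\{r_0,Ar_0,\dots,A^{k-1}r_0\}$; for $k\le n$ all CG quantities above are well defined and $\gamma_{k-1}>0$. $T_k$ coincides with the Jacobi matrix of Lanczos recurrence coefficients generated by $A$ and $r_0/\|r_0\|$. *)

theory Defs
  imports "HOL-Analysis.Analysis" "Jordan_Normal_Form.Gauss_Jordan_Elimination"
begin

definition krylov :: "real^'n^'n \<Rightarrow> real^'n \<Rightarrow> nat \<Rightarrow> (real^'n) set" where
  "krylov A v k = span {(((*v) A) ^^ j) v | j. j < k}"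

definition grade :: "real^'n^'n \<Rightarrow> real^'n \<Rightarrow> nat" where
  "grade A v = Max (range (\<lambda>k. dim (krylov A v k)))"

fun cg :: "real^'n^'n \<Rightarrow> real^'n \<Rightarrow> real^'n \<Rightarrow> nat \<Rightarrow> (real^'n) \<times> (real^'n) \<times> (real^'n)" where
  "cg A b x0 0 = (x0, b - A *v x0, b - A *v x0)"
| "cg A b x0 (Suc k) =
     (case cg A b x0 k of (x, r, p) \<Rightarrow>
       let \<gamma> = inner r r / inner p (A *v p);
           x' = x + \<gamma> *\<^sub>R p;
           r' = r - \<gamma> *\<^sub>R (A *v p);
           \<delta> = inner r' r' / inner r r;
           p' = r' + \<delta> *\<^sub>R p
       in (x', r', p'))"

definition cg_x where "cg_x A b x0 k = fst (cg A b x0 k)"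
definition cg_r where "cg_r A b x0 k = fst (snd (cg A b x0 k))"
definition cg_p where "cg_p A b x0 k = snd (snd (cg A b x0 k))"

definition cg_gamma :: "real^'n^'n \<Rightarrow> real^'n \<Rightarrow> real^'n \<Rightarrow> nat \<Rightarrow> real" where
  "cg_gamma A b x0 k = inner (cg_r A b x0 k) (cg_r A b x0 k) /
      inner (cg_p A b x0 k) (A *v cg_p A b x0 k)"

(* delta_k = r_k^T r_k / r_{k-1}^T r_{k-1}, meaningful for k >= 1 *)
definition cg_delta :: "real^'n^'n \<Rightarrow> real^'n \<Rightarrow> real^'n \<Rightarrow> nat \<Rightarrow> real" where
  "cg_delta A b x0 k = inner (cg_r A b x0 k) (cg_r A b x0 k) /
      inner (cg_r A b x0 (k - 1)) (cg_r A b x0 (k - 1))"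

definition cg_psi :: "real^'n^'n \<Rightarrow> real^'n \<Rightarrow> real^'n \<Rightarrow> nat \<Rightarrow> real" where
  "cg_psi A b x0 i = cg_gamma A b x0 i * (norm (cg_r A b x0 i))^2"

(* L_k^T : k x k upper bidiagonal (0-based indices);
   diagonal (i,i): 1/sqrt(gamma_i), superdiagonal (i,i+1): sqrt(delta_{i+1}/gamma_i) *)
definition LT_mat :: "real^'n^'n \<Rightarrow> real^'n \<Rightarrow> real^'n \<Rightarrow> nat \<Rightarrow> real mat" where
  "LT_mat A b x0 k = mat k k (\<lambda>(i, j).
      if j = i then 1 / sqrt (cg_gamma A b x0 i)
      else if j = i + 1 then sqrt (cg_delta A b x0 (i + 1) / cg_gamma A b x0 i)
      else 0)"

definition T_mat :: "real^'n^'n \<Rightarrow> real^'n \<Rightarrow> real^'n \<Rightarrow> nat \<Rightarrow> real mat" where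
  "T_mat A b x0 k = transpose_mat (LT_mat A b x0 k) * LT_mat A b x0 k"

definition cg_xi :: "real^'n^'n \<Rightarrow> real^'n \<Rightarrow> real^'n \<Rightarrow> nat \<Rightarrow> real" where
  "cg_xi A b x0 k = (if k = 0 then 0 else
      (let Ti = the (mat_inverse (T_mat A b x0 k))
       in (norm (cg_r A b x0 0))^2 * ((Ti * Ti) $$ (0, 0))))"

fun cg_phi :: "real^'n^'n \<Rightarrow> real^'n \<Rightarrow> real^'n \<Rightarrow> nat \<Rightarrow> real" where
  "cg_phi A b x0 0 = 1"
| "cg_phi A b x0 (Suc k) = cg_phi A b x0 k / (cg_phi A b x0 k + cg_delta A b x0 (Suc k))"

fun cg_theta :: "real^'n^'n \<Rightarrow> real^'n \<Rightarrow> real^'n \<Rightarrow> nat \<Rightarrow> real" where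
  "cg_theta A b x0 0 = 0"
| "cg_theta A b x0 (Suc k) = cg_theta A b x0 k + cg_gamma A b x0 k * inverse (cg_phi A b x0 k)"

end

theory Submission
  imports Defs "Jordan_Normal_Form.Determinant"
begin

lemma cg_r_0: "cg_r A b x0 0 = b - A *v x0" by (simp add: cg_r_def)
lemma cg_p_0: "cg_p A b x0 0 = b - A *v x0" by (simp add: cg_p_def)

lemma cg_r_Suc: "cg_r A b x0 (Suc j) = cg_r A b x0 j - cg_gamma A b x0 j *\<^sub>R (A *v cg_p A b x0 j)"
  by (simp add: cg_r_def cg_p_def cg_gamma_def Let_def split: prod.split)

lemma cg_p_Suc: "cg_p A b x0 (Suc j) = cg_r A b x0 (Suc j) + cg_delta A b x0 (Suc j) *\<^sub>R cg_p A b x0 j"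
  by (simp add: cg_r_def cg_p_def cg_gamma_def cg_delta_def Let_def split: prod.split)

abbreviation pw :: "real^'n^'n \<Rightarrow> real^'n \<Rightarrow> nat \<Rightarrow> real^'n" where
  "pw A v i \<equiv> (((*v) A) ^^ i) v"

lemma pw_Suc: "pw A v (Suc i) = A *v pw A v i" by simp

lemma kry_eq: "krylov A v k = span (pw A v ` {..<k})"
  unfolding krylov_def by (rule arg_cong[where f=span]) auto

lemma kry_sub: "subspace (krylov A v k)" by (simp add: krylov_def subspace_span)

lemma kry_mono: "j \<le> k \<Longrightarrow> krylov A v j \<subseteq> krylov A v k"
  unfolding kry_eq by (rule span_mono) auto

lemma kry_pw: "i < k \<Longrightarrow> pw A v i \<in> krylov A v k"
  unfolding kry_eq by (rule span_base) auto

lemma kry_A: assumes "x \<in> krylov A v k" shows "A *v x \<in> krylov A v (Suc k)"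
proof -
  have lin: "linear ((*v) A)" by (simp add: matrix_vector_mul_linear)
  have "A *v x \<in> (*v) A ` span (pw A v ` {..<k})" using assms unfolding kry_eq by blast
  also have "\<dots> = span ((*v) A ` pw A v ` {..<k})" by (simp add: span_linear_image[OF lin])
  also have "\<dots> \<subseteq> span (pw A v ` {..<Suc k})"
    by (rule span_mono) (auto simp del: funpow.simps simp add: pw_Suc[symmetric])
  finally show ?thesis unfolding kry_eq .
qed

lemma kry_dim: "dim (krylov A v k) \<le> k"
proof -
  have "dim (krylov A v k) = dim (pw A v ` {..<k})" unfolding kry_eq by (simp add: dim_span)
  also have "\<dots> \<le> card (pw A v ` {..<k})" by (rule dim_le_card') simp
  also have "\<dots> \<le> k" using card_image_le[of "{..<k}" "pw A v"] by simp
  finally show ?thesis .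
qed

lemma kry_key:
  assumes "j < grade A v" shows "pw A v j \<notin> krylov A v j"
proof
  assume H: "pw A v j \<in> krylov A v j"
  have S: "krylov A v (Suc j) \<subseteq> krylov A v j"
    unfolding kry_eq[of A v "Suc j"]
  proof (rule span_minimal[OF _ kry_sub])
    show "pw A v ` {..<Suc j} \<subseteq> krylov A v j"
      using H kry_pw[of _ j A v] less_Suc_eq by auto
  qed
  have all: "pw A v m \<in> krylov A v j" for m
  proof (induction m)
    case 0 show ?case
      by (metis H funpow_0 kry_pw neq0_conv)
  next
    case (Suc m)
    then show ?case
      using kry_A[OF Suc] S by (auto simp del: funpow.simps simp add: pw_Suc)
  qed
  have "dim (krylov A v m) \<le> j" for m
  proof -
    have "krylov A v m \<subseteq> krylov A v j"
      unfolding kry_eq[of A v m] by (rule span_minimal[OF _ kry_sub]) (use all in auto)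
    then have "dim (krylov A v m) \<le> dim (krylov A v j)" by (rule dim_subset)
    then show ?thesis using kry_dim[of A v j] by simp
  qed
  then have fin: "range (\<lambda>k. dim (krylov A v k)) \<subseteq> {..j}" by auto
  have "grade A v \<le> j" unfolding grade_def
    using fin finite_subset[OF fin] by (subst Max_le_iff) auto
  with assms show False by simp
qed

lemma kry_nz:
  assumes "j < grade A v" "a \<noteq> 0" "k \<in> krylov A v j"
  shows "a *\<^sub>R pw A v j + k \<noteq> 0"
proof
  assume H: "a *\<^sub>R pw A v j + k = 0"
  have h: "a *\<^sub>R pw A v j = - k" using H by (simp add: eq_neg_iff_add_eq_0)
  have "pw A v j = inverse a *\<^sub>R (a *\<^sub>R pw A v j)" using assms(2) by simp
  also have "\<dots> = inverse a *\<^sub>R (- k)" using h by simp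
  finally have "pw A v j \<in> krylov A v j"
    using assms(3) kry_sub subspace_scale subspace_neg by metis
  with kry_key[OF assms(1)] show False by simp
qed

lemma cg_struct:
  fixes A :: "real^'N^'N" and b x0 :: "real^'N"
  assumes posdef: "\<And>v. v \<noteq> 0 \<Longrightarrow> inner v (A *v v) > 0"
  shows "j < grade A (b - A *v x0) \<Longrightarrow> \<exists>a kr kp. a \<noteq> 0 \<and> kr \<in> krylov A (b - A *v x0) j
     \<and> kp \<in> krylov A (b - A *v x0) j
     \<and> cg_r A b x0 j = a *\<^sub>R pw A (b - A *v x0) j + kr
     \<and> cg_p A b x0 j = a *\<^sub>R pw A (b - A *v x0) j + kp"
proof (induction j)
  case 0
  show ?case
    by (rule exI[of _ 1], rule exI[of _ 0], rule exI[of _ 0])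
       (simp add: cg_r_0 cg_p_0 kry_sub subspace_0)
next
  case (Suc j)
  define v where "v = b - A *v x0"
  have jn: "j < grade A v" using Suc.prems v_def by simp
  from Suc.IH[OF jn[unfolded v_def], folded v_def] obtain a kr kp where a: "a \<noteq> 0"
     and kr: "kr \<in> krylov A v j" and kp: "kp \<in> krylov A v j"
     and r: "cg_r A b x0 j = a *\<^sub>R pw A v j + kr" and p: "cg_p A b x0 j = a *\<^sub>R pw A v j + kp"
    by blast
  have rnz: "cg_r A b x0 j \<noteq> 0" using kry_nz[OF jn a kr] r by simp
  have pnz: "cg_p A b x0 j \<noteq> 0" using kry_nz[OF jn a kp] p by simp
  define g where "g = cg_gamma A b x0 j"
  have gpos: "g > 0" unfolding g_def cg_gamma_def using posdef[OF pnz] rnz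
    by (simp add: divide_pos_pos)
  define kr' where "kr' = a *\<^sub>R pw A v j + kr - g *\<^sub>R (A *v kp)"
  have kr': "kr' \<in> krylov A v (Suc j)" unfolding kr'_def
    by (intro subspace_diff[OF kry_sub] subspace_add[OF kry_sub] subspace_scale[OF kry_sub]
        kry_pw kry_A kp) (use kry_mono[of j "Suc j" A v] kr in auto)
  have Apw: "A *v pw A v j = pw A v (Suc j)" by simp
  have r': "cg_r A b x0 (Suc j) = (- g * a) *\<^sub>R pw A v (Suc j) + kr'"
  proof -
    have "cg_r A b x0 (Suc j) = (a *\<^sub>R pw A v j + kr) - g *\<^sub>R (A *v (a *\<^sub>R pw A v j + kp))"
      unfolding cg_r_Suc g_def r p ..
    also have "\<dots> = (a *\<^sub>R pw A v j + kr) - g *\<^sub>R (a *\<^sub>R (A *v pw A v j) + A *v kp)"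
      by (simp only: matrix_vector_right_distrib matrix_vector_mult_scaleR)
    also have "\<dots> = (- g * a) *\<^sub>R (A *v pw A v j) + kr'"
      unfolding kr'_def by (simp add: algebra_simps)
    finally show ?thesis unfolding Apw .
  qed
  have pS: "cg_p A b x0 j \<in> krylov A v (Suc j)" unfolding p
    by (intro subspace_add[OF kry_sub] subspace_scale[OF kry_sub] kry_pw)
       (use kry_mono[of j "Suc j" A v] kp in auto)
  define kp' where "kp' = kr' + cg_delta A b x0 (Suc j) *\<^sub>R cg_p A b x0 j"
  have kp': "kp' \<in> krylov A v (Suc j)" unfolding kp'_def
    by (intro subspace_add[OF kry_sub] subspace_scale[OF kry_sub] kr' pS)
  have p': "cg_p A b x0 (Suc j) = (- g * a) *\<^sub>R pw A v (Suc j) + kp'"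
    unfolding cg_p_Suc r' kp'_def by (simp only: add.assoc)
  have "\<exists>a kr kp. a \<noteq> 0 \<and> kr \<in> krylov A v (Suc j) \<and> kp \<in> krylov A v (Suc j)
     \<and> cg_r A b x0 (Suc j) = a *\<^sub>R pw A v (Suc j) + kr
     \<and> cg_p A b x0 (Suc j) = a *\<^sub>R pw A v (Suc j) + kp"
  proof -
    have "- g * a \<noteq> 0" using a gpos by simp
    then show ?thesis using kr' kp' r' p' by blast
  qed
  from this[unfolded v_def] show ?case .
qed

lemma cg_pos:
  fixes A :: "real^'N^'N" and b x0 :: "real^'N"
  assumes posdef: "\<And>v. v \<noteq> 0 \<Longrightarrow> inner v (A *v v) > 0"
    and j: "j < grade A (b - A *v x0)"
  shows "norm (cg_r A b x0 j) > 0" "cg_gamma A b x0 j > 0"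
proof -
  obtain a kr kp where a: "a \<noteq> 0" and kr: "kr \<in> krylov A (b - A *v x0) j"
     and kp: "kp \<in> krylov A (b - A *v x0) j"
     and r: "cg_r A b x0 j = a *\<^sub>R pw A (b - A *v x0) j + kr"
     and p: "cg_p A b x0 j = a *\<^sub>R pw A (b - A *v x0) j + kp"
    using cg_struct[OF posdef j] by blast
  have rnz: "cg_r A b x0 j \<noteq> 0" using kry_nz[OF j a kr] r by simp
  have pnz: "cg_p A b x0 j \<noteq> 0" using kry_nz[OF j a kp] p by simp
  show "norm (cg_r A b x0 j) > 0" using rnz by simp
  show "cg_gamma A b x0 j > 0" unfolding cg_gamma_def using posdef[OF pnz] rnz
    by (simp add: divide_pos_pos)
qed


lemma sum_bidiag:
  fixes w :: "nat \<Rightarrow> real"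
  assumes "i < k"
  shows "(\<Sum>j<k. (if j = i then p else if j = Suc i then q else 0) * w j)
         = p * w i + (if Suc i < k then q * w (Suc i) else 0)"
proof -
  have "(\<Sum>j<k. (if j = i then p else if j = Suc i then q else 0) * w j)
      = (\<Sum>j<k. (if j = i then p * w i else 0) + (if j = Suc i then q * w (Suc i) else 0))"
    by (rule sum.cong) auto
  also have "\<dots> = p * w i + (if Suc i < k then q * w (Suc i) else 0)"
    using assms by (simp add: sum.distrib)
  finally show ?thesis .
qed

lemma sum_bidiag2:
  fixes w :: "nat \<Rightarrow> real"
  assumes "i < k"
  shows "(\<Sum>j<k. (if i = j then p j else if i = Suc j then q j else 0) * w j)
         = p i * w i + (if 0 < i then q (i - 1) * w (i - 1) else 0)"
proof -
  have "(\<Sum>j<k. (if i = j then p j else if i = Suc j then q j else 0) * w j)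
      = (\<Sum>j<k. (if j = i then p i * w i else 0) + (if 0 < i \<and> j = i - 1 then q (i - 1) * w (i - 1) else 0))"
    by (rule sum.cong) auto
  also have "\<dots> = p i * w i + (if 0 < i then q (i - 1) * w (i - 1) else 0)"
    using assms by (simp add: sum.distrib)
  finally show ?thesis .
qed

lemma alg_row:
  fixes tg n0 ni ni' s S' :: real
  assumes "tg > 0" "n0 > 0" "ni > 0" "ni' > 0"
  shows "1/tg * (s * (tg^2*ni^2 + S') / (n0*ni)) + ni'/(ni*tg) * (-s * S'/(n0*ni')) = s*tg*ni/n0"
  using assms by (simp add: field_simps power2_eq_square)

lemma alg_row_last:
  fixes tg n0 ni s :: real
  assumes "tg > 0" "n0 > 0" "ni > 0"
  shows "1/tg * (s * (tg^2*ni^2) / (n0*ni)) = s*tg*ni/n0"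
  using assms by (simp add: field_simps power2_eq_square)

lemma alg_col:
  fixes tg tg2 n0 ni ni' s :: real
  assumes "tg > 0" "tg2 > 0" "n0 > 0" "ni > 0" "ni' > 0"
  shows "1/tg * (- s * tg * ni / n0) + ni/(ni'*tg2) * (s * tg2 * ni' / n0) = 0"
  using assms by (simp add: field_simps)

lemma alg_fin:
  fixes s n0 nj S :: real
  assumes "n0 > 0" "nj > 0" "s * s = 1"
  shows "n0^2 * ((s * S / (n0 * nj)) * (s * S / (n0 * nj))) = inverse (nj^2) * S^2"
proof -
  have "(s * S / (n0 * nj)) * (s * S / (n0 * nj)) = (s * s) * S^2 / (n0^2 * nj^2)"
    by (simp add: power2_eq_square algebra_simps)
  then show ?thesis using assms by (simp add: field_simps)
qed

lemma neg1_sq: "(-1::real)^l * (-1)^l = 1"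
  by (simp flip: power_add)

lemma mult_entry:
  assumes "A \<in> carrier_mat n m" "B \<in> carrier_mat m p" "i < n" "j < p"
  shows "(A * B) $$ (i, j) = (\<Sum>l<m. A $$ (i, l) * B $$ (l, j))"
  using assms by (auto simp: scalar_prod_def atLeast0LessThan intro!: sum.cong)

lemma col_unit:
  fixes A :: "real mat"
  assumes "A \<in> carrier_mat k k" "l < k" "0 < k"
  shows "(A * mat k 1 (\<lambda>(i, j). if i = 0 then 1 else 0)) $$ (l, 0) = A $$ (l, 0)"
proof -
  have "(A * mat k 1 (\<lambda>(i, j). if i = 0 then 1 else 0)) $$ (l, 0)
     = (\<Sum>j<k. A $$ (l, j) * mat k 1 (\<lambda>(i, j). if i = 0 then 1 else (0::real)) $$ (j, 0))"
    using assms by (intro mult_entry) auto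
  also have "\<dots> = (\<Sum>j<k. if j = 0 then A $$ (l, 0) else 0)"
    by (rule sum.cong) auto
  also have "\<dots> = A $$ (l, 0)" using assms by simp
  finally show ?thesis .
qed

lemma xi_formula:
  fixes A :: "real^'N^'N" and b x0 :: "real^'N"
  assumes k1: "1 \<le> k" and gp: "\<And>i. i < k \<Longrightarrow> cg_gamma A b x0 i > 0"
    and np: "\<And>i. i < k \<Longrightarrow> norm (cg_r A b x0 i) > 0"
  shows "cg_xi A b x0 k =
     (\<Sum>j<k. inverse ((norm (cg_r A b x0 j))^2) * (\<Sum>i=j..<k. cg_psi A b x0 i)^2)"
proof -
  define g where "g i = cg_gamma A b x0 i" for i
  define nr where "nr i = norm (cg_r A b x0 i)" for i
  define S where "S i = (\<Sum>l=i..<k. cg_psi A b x0 l)" for i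
  define zf where "zf i = (-1::real)^i * S i / (nr 0 * nr i)" for i
  define yf where "yf i = (-1::real)^i * sqrt (g i) * nr i / nr 0" for i
  define LT where "LT = LT_mat A b x0 k"
  define T where "T = T_mat A b x0 k"
  define Z where "Z = mat k 1 (\<lambda>(i, j). zf i)"
  define Y where "Y = mat k 1 (\<lambda>(i, j). yf i)"
  define E where "E = mat k 1 (\<lambda>(i, j). if i = 0 then 1 else (0::real))"
  have k0: "0 < k" using k1 by simp
  have gp': "i < k \<Longrightarrow> g i > 0" for i using gp g_def by simp
  have np': "i < k \<Longrightarrow> nr i > 0" for i using np nr_def by simp
  have sgp: "sqrt (g i) > 0" if "i < k" for i using gp'[OF that] by simp
  have sq: "sqrt (g i) ^ 2 = g i" if "i < k" for i using gp'[OF that] by simp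
  have psi: "cg_psi A b x0 i = sqrt (g i) ^ 2 * nr i ^ 2" if "i < k" for i
    using sq[OF that] by (simp add: cg_psi_def g_def nr_def)
  have sdel: "sqrt (cg_delta A b x0 (i + 1) / cg_gamma A b x0 i) = nr (Suc i) / (nr i * sqrt (g i))"
    if "i < k" for i
  proof -
    have "cg_delta A b x0 (i + 1) = (nr (Suc i) / nr i)^2"
      by (simp add: cg_delta_def nr_def power2_norm_eq_inner power_divide)
    then have "sqrt (cg_delta A b x0 (i + 1) / cg_gamma A b x0 i) = sqrt ((nr (Suc i) / nr i)^2) / sqrt (g i)"
      by (simp add: g_def real_sqrt_divide)
    also have "\<dots> = nr (Suc i) / (nr i * sqrt (g i))"
      using np'[OF that] by (simp add: nr_def)
    finally show ?thesis .
  qed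
  have LTc: "LT \<in> carrier_mat k k" by (simp add: LT_def LT_mat_def)
  have LTe: "LT $$ (i, j) = (if j = i then 1 / sqrt (g i) else if j = Suc i then nr (Suc i) / (nr i * sqrt (g i)) else 0)"
    if "i < k" "j < k" for i j
    using that sdel[OF that(1)] by (simp add: LT_def LT_mat_def g_def)
  have Tdef: "T = transpose_mat LT * LT" by (simp add: T_def T_mat_def LT_def)
  have Tc: "T \<in> carrier_mat k k" using LTc Tdef by simp
  have ut: "upper_triangular LT"
    using LTc LTe by (auto simp: upper_triangular_def)
  have "det LT = prod_list (diag_mat LT)" by (rule det_upper_triangular[OF ut LTc])
  also have "\<dots> \<noteq> 0"
  proof -
    have dn: "LT $$ (i, i) \<noteq> 0" if "i < k" for i using LTe[OF that that] sgp[OF that] by simp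
    have "0 \<notin> set (diag_mat LT)" using LTc dn by (auto simp: diag_mat_def)
    then show ?thesis by (simp add: prod_list_zero_iff)
  qed
  finally have dLT: "det LT \<noteq> 0" .
  have "det T = det (transpose_mat LT) * det LT" unfolding Tdef
    by (rule det_mult) (use LTc in auto)
  also have "\<dots> = det LT * det LT" using det_transpose[OF LTc] by simp
  finally have dT: "det T \<noteq> 0" using dLT by simp
  have TU: "T \<in> Units (ring_mat TYPE(real) k ())"
    by (rule det_non_zero_imp_unit[OF Tc dT])
  have "mat_inverse T \<noteq> None"
  proof
    assume "mat_inverse T = None"
    from mat_inverse(1)[OF Tc this] have "T \<notin> Units (ring_mat TYPE(real) k ())" .
    with TU show False by blast
  qed
  then obtain Ti where Ti: "mat_inverse T = Some Ti" by blast
  from mat_inverse(2)[OF Tc Ti] have TTi: "T * Ti = 1\<^sub>m k" and TiT: "Ti * T = 1\<^sub>m k"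
    and Tic: "Ti \<in> carrier_mat k k" by auto
  have Zc: "Z \<in> carrier_mat k 1" and Yc: "Y \<in> carrier_mat k 1" and Ec: "E \<in> carrier_mat k 1"
    by (simp_all add: Z_def Y_def E_def)
  have Sk: "S i = cg_psi A b x0 i + S (Suc i)" if "i < k" for i
    using that by (simp add: S_def sum.atLeast_Suc_lessThan)
  have LTZ: "LT * Z = Y"
  proof (rule eq_matI)
    fix i j assume i: "i < dim_row Y" and j: "j < dim_col Y"
    then have ik: "i < k" and j0: "j = 0" by (auto simp: Y_def)
    have "(LT * Z) $$ (i, j) = (\<Sum>l<k. LT $$ (i, l) * Z $$ (l, 0))"
      unfolding j0 using LTc Zc ik by (intro mult_entry) auto
    also have "\<dots> = (\<Sum>l<k. (if l = i then 1 / sqrt (g i) else if l = Suc i then nr (Suc i) / (nr i * sqrt (g i)) else 0) * zf l)"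
      by (rule sum.cong) (auto simp: LTe ik Z_def)
    also have "\<dots> = 1 / sqrt (g i) * zf i + (if Suc i < k then nr (Suc i) / (nr i * sqrt (g i)) * zf (Suc i) else 0)"
      by (rule sum_bidiag[OF ik])
    also have "\<dots> = yf i"
    proof (cases "Suc i < k")
      case True
      have "1 / sqrt (g i) * zf i + nr (Suc i) / (nr i * sqrt (g i)) * zf (Suc i)
         = 1/sqrt (g i) * ((-1)^i * (sqrt (g i)^2 * nr i^2 + S (Suc i)) / (nr 0 * nr i))
           + nr (Suc i) / (nr i * sqrt (g i)) * (- ((-1)^i) * S (Suc i) / (nr 0 * nr (Suc i)))"
        unfolding zf_def Sk[OF ik] psi[OF ik] by simp
      also have "\<dots> = (-1)^i * sqrt (g i) * nr i / nr 0"
        by (rule alg_row) (use sgp np' ik True k0 in auto)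
      finally show ?thesis using True by (simp add: yf_def)
    next
      case False
      then have "Suc i = k" using ik by simp
      then have "S i = cg_psi A b x0 i" using Sk[OF ik] by (simp add: S_def)
      then have "1 / sqrt (g i) * zf i = 1/sqrt (g i) * ((-1)^i * (sqrt (g i)^2 * nr i^2) / (nr 0 * nr i))"
        unfolding zf_def psi[OF ik] by simp
      also have "\<dots> = (-1)^i * sqrt (g i) * nr i / nr 0"
        by (rule alg_row_last) (use sgp np' ik k0 in auto)
      finally show ?thesis using False by (simp add: yf_def)
    qed
    also have "\<dots> = Y $$ (i, j)" using ik j0 by (simp add: Y_def)
    finally show "(LT * Z) $$ (i, j) = Y $$ (i, j)" .
  next
    show "dim_row (LT * Z) = dim_row Y" "dim_col (LT * Z) = dim_col Y"
      using LTc by (auto simp: Y_def Z_def)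
  qed
  have LTY: "transpose_mat LT * Y = E"
  proof (rule eq_matI)
    fix i j assume i: "i < dim_row E" and j: "j < dim_col E"
    then have ik: "i < k" and j0: "j = 0" by (auto simp: E_def)
    have "(transpose_mat LT * Y) $$ (i, j) = (\<Sum>l<k. transpose_mat LT $$ (i, l) * Y $$ (l, 0))"
      unfolding j0 using LTc Yc ik by (intro mult_entry) auto
    also have "\<dots> = (\<Sum>l<k. (if i = l then 1 / sqrt (g l) else if i = Suc l then nr (Suc l) / (nr l * sqrt (g l)) else 0) * yf l)"
      by (rule sum.cong) (use LTc in \<open>auto simp: LTe ik Y_def\<close>)
    also have "\<dots> = 1 / sqrt (g i) * yf i + (if 0 < i then nr (Suc (i - 1)) / (nr (i - 1) * sqrt (g (i - 1))) * yf (i - 1) else 0)"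
      by (rule sum_bidiag2[OF ik])
    also have "\<dots> = E $$ (i, j)"
    proof (cases "i = 0")
      case True
      then show ?thesis using sgp[OF k0] np'[OF k0] ik j0 by (simp add: yf_def E_def)
    next
      case False
      then obtain m where m: "i = Suc m" by (cases i) auto
      have mk: "m < k" using ik m by simp
      have "1 / sqrt (g i) * yf i + nr (Suc m) / (nr m * sqrt (g m)) * yf m
          = 1 / sqrt (g i) * (- ((-1)^m) * sqrt (g i) * nr i / nr 0)
            + nr i / (nr m * sqrt (g m)) * ((-1)^m * sqrt (g m) * nr m / nr 0)"
        unfolding yf_def m by simp
      also have "\<dots> = 0"
        by (rule alg_col) (use sgp np' ik mk k0 in auto)
      finally show ?thesis using m ik j0 by (simp add: E_def)
    qed
    finally show "(transpose_mat LT * Y) $$ (i, j) = E $$ (i, j)" .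
  next
    show "dim_row (transpose_mat LT * Y) = dim_row E" "dim_col (transpose_mat LT * Y) = dim_col E"
      using LTc by (auto simp: Y_def E_def)
  qed
  have TZ: "T * Z = E"
    unfolding Tdef using LTc Zc LTZ LTY by (subst assoc_mult_mat[of _ k k _ k _ 1]) auto
  have TiE: "Ti * E = Z"
  proof -
    have "Ti * E = Ti * (T * Z)" using TZ by simp
    also have "\<dots> = (Ti * T) * Z" using Tic Tc Zc by (simp add: assoc_mult_mat)
    also have "\<dots> = Z" using TiT Zc by simp
    finally show ?thesis .
  qed
  have Tsym: "transpose_mat T = T" unfolding Tdef using LTc by (simp add: transpose_mult[of _ k k _ k])
  have TitT: "transpose_mat Ti * T = 1\<^sub>m k"
  proof -
    have "transpose_mat (T * Ti) = transpose_mat Ti * transpose_mat T"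
      using Tc Tic by (rule transpose_mult)
    then show ?thesis using TTi Tsym by simp
  qed
  have TitE: "transpose_mat Ti * E = Z"
  proof -
    have "transpose_mat Ti * E = transpose_mat Ti * (T * Z)" using TZ by simp
    also have "\<dots> = (transpose_mat Ti * T) * Z" using Tic Tc Zc by (simp add: assoc_mult_mat)
    also have "\<dots> = Z" using TitT Zc by simp
    finally show ?thesis .
  qed
  have col0: "Ti $$ (l, 0) = zf l" if "l < k" for l
  proof -
    have "Ti $$ (l, 0) = (Ti * E) $$ (l, 0)" unfolding E_def using col_unit[OF Tic that k0] by simp
    also have "\<dots> = zf l" using that by (simp add: TiE Z_def)
    finally show ?thesis .
  qed
  have row0: "Ti $$ (0, l) = zf l" if "l < k" for l
  proof -
    have "Ti $$ (0, l) = transpose_mat Ti $$ (l, 0)" using Tic that k0 by simp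
    also have "\<dots> = (transpose_mat Ti * E) $$ (l, 0)" unfolding E_def
      using col_unit[of "transpose_mat Ti" k l] Tic that k0 by simp
    also have "\<dots> = zf l" using that by (simp add: TitE Z_def)
    finally show ?thesis .
  qed
  have "(Ti * Ti) $$ (0, 0) = (\<Sum>l<k. Ti $$ (0, l) * Ti $$ (l, 0))"
    using Tic k0 by (intro mult_entry) auto
  also have "\<dots> = (\<Sum>l<k. zf l * zf l)" by (rule sum.cong) (auto simp: row0 col0)
  finally have TT: "(Ti * Ti) $$ (0, 0) = (\<Sum>l<k. zf l * zf l)" .
  have "cg_xi A b x0 k = nr 0 ^ 2 * (\<Sum>l<k. zf l * zf l)"
    using k1 TT Ti by (simp add: cg_xi_def T_def nr_def Let_def)
  also have "\<dots> = (\<Sum>j<k. nr 0 ^ 2 * (zf j * zf j))" by (simp add: sum_distrib_left)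
  also have "\<dots> = (\<Sum>j<k. inverse ((nr j)^2) * (S j)^2)"
  proof (rule sum.cong)
    fix j assume "j \<in> {..<k}"
    then have jk: "j < k" by simp
    show "nr 0 ^ 2 * (zf j * zf j) = inverse ((nr j)^2) * (S j)^2"
      unfolding zf_def by (rule alg_fin) (use np' jk k0 neg1_sq in auto)
  qed simp
  finally show ?thesis by (simp add: nr_def S_def)
qed


lemma theta_swap:
  "(\<Sum>j<m. (\<psi>::nat\<Rightarrow>real) j * (\<Sum>i\<le>j. w i)) = (\<Sum>i<m. w i * (\<Sum>l=i..<m. \<psi> l))"
proof (induction m)
  case 0 then show ?case by simp
next
  case (Suc m)
  have "(\<Sum>i<Suc m. w i * (\<Sum>l=i..<Suc m. \<psi> l)) = (\<Sum>i<m. w i * (\<Sum>l=i..<m. \<psi> l) + w i * \<psi> m) + w m * \<psi> m"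
    by (auto intro!: sum.cong simp: algebra_simps)
  also have "\<dots> = (\<Sum>i<m. w i * (\<Sum>l=i..<m. \<psi> l)) + \<psi> m * (\<Sum>i\<le>m. w i)"
    by (simp add: sum.distrib sum_distrib_left sum_distrib_right lessThan_Suc_atMost[symmetric] algebra_simps)
  finally show ?case using Suc by simp
qed

lemma xi_step:
  fixes \<psi> w :: "nat \<Rightarrow> real"
  shows "(\<Sum>j<Suc k. w j * (\<Sum>i=j..<Suc k. \<psi> i)^2) =
     (\<Sum>j<k. w j * (\<Sum>i=j..<k. \<psi> i)^2) + \<psi> k *
        ((\<Sum>i<Suc k. w i * (\<Sum>l=i..<Suc k. \<psi> l)) + (\<Sum>i<k. w i * (\<Sum>l=i..<k. \<psi> l)))"
proof -
  have e1: "(\<Sum>j<Suc k. w j * (\<Sum>i=j..<Suc k. \<psi> i)^2) =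
     (\<Sum>j<k. w j * ((\<Sum>i=j..<k. \<psi> i) + \<psi> k)^2) + w k * \<psi> k ^ 2"
    by (auto intro!: sum.cong)
  have e2: "(\<Sum>i<Suc k. w i * (\<Sum>l=i..<Suc k. \<psi> l)) =
     (\<Sum>i<k. w i * ((\<Sum>l=i..<k. \<psi> l) + \<psi> k)) + w k * \<psi> k"
    by (auto intro!: sum.cong)
  show ?thesis unfolding e1 e2
    by (simp add: power2_eq_square sum.distrib sum_distrib_left sum_distrib_right algebra_simps)
qed

lemma alg_phi:
  fixes n n' U :: real
  assumes "n > 0" "n' > 0" "U > 0"
  shows "inverse (inverse (n^2 * U) / (inverse (n^2 * U) + n'^2 / n^2)) = n'^2 * (U + inverse (n'^2))"
  using assms by (simp add: field_simps power2_eq_square)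

lemma phi_inv:
  fixes A :: "real^'N^'N" and b x0 :: "real^'N"
  assumes np: "\<And>i. i < n \<Longrightarrow> norm (cg_r A b x0 i) > 0"
  shows "j < n \<Longrightarrow> inverse (cg_phi A b x0 j) =
     (norm (cg_r A b x0 j))^2 * (\<Sum>i\<le>j. inverse ((norm (cg_r A b x0 i))^2))"
proof (induction j)
  case 0
  then show ?case using np[OF 0] by simp
next
  case (Suc j)
  define U where "U = (\<Sum>i\<le>j. inverse ((norm (cg_r A b x0 i))^2))"
  have jn: "j < n" using Suc.prems by simp
  have Upos: "U > 0" unfolding U_def
    by (rule sum_pos) (use np jn in auto)
  have ph: "cg_phi A b x0 j = inverse ((norm (cg_r A b x0 j))^2 * U)"
    using Suc.IH[OF jn] unfolding U_def by (metis inverse_inverse_eq)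
  have de: "cg_delta A b x0 (Suc j) = (norm (cg_r A b x0 (Suc j)))^2 / (norm (cg_r A b x0 j))^2"
    by (simp add: cg_delta_def power2_norm_eq_inner)
  have "inverse (cg_phi A b x0 (Suc j)) = (norm (cg_r A b x0 (Suc j)))^2 * (U + inverse ((norm (cg_r A b x0 (Suc j)))^2))"
    unfolding cg_phi.simps ph de
    by (rule alg_phi) (use np jn Suc.prems Upos in auto)
  then show ?case by (simp add: U_def)
qed

lemma theta_closed:
  fixes A :: "real^'N^'N" and b x0 :: "real^'N"
  assumes np: "\<And>i. i < n \<Longrightarrow> norm (cg_r A b x0 i) > 0"
  shows "m \<le> n \<Longrightarrow> cg_theta A b x0 m =
     (\<Sum>j<m. cg_psi A b x0 j * (\<Sum>i\<le>j. inverse ((norm (cg_r A b x0 i))^2)))"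
proof (induction m)
  case 0 then show ?case by simp
next
  case (Suc m)
  then have mn: "m < n" by simp
  show ?case using Suc.IH mn phi_inv[OF np mn]
    by (simp add: cg_psi_def mult.assoc)
qed

theorem lemma1:
  fixes A :: "real^'N^'N" and b x0 :: "real^'N"
  assumes symm: "transpose A = A"
    and posdef: "\<And>v. v \<noteq> 0 \<Longrightarrow> inner v (A *v v) > 0"
    and r0: "b - A *v x0 \<noteq> 0"
  defines "n \<equiv> grade A (b - A *v x0)"
  shows "(\<forall>k. 1 \<le> k \<and> k \<le> n \<longrightarrow>
            cg_xi A b x0 k =
              (\<Sum>j<k. inverse ((norm (cg_r A b x0 j))^2) *
                        (\<Sum>i=j..<k. cg_psi A b x0 i)^2))
       \<and> (\<forall>k. k + 1 \<le> n \<longrightarrow>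
            cg_xi A b x0 (k + 1) =
              cg_xi A b x0 k + cg_psi A b x0 k * (cg_theta A b x0 (k + 1) + cg_theta A b x0 k))"
proof -
  have gp: "\<And>i. i < n \<Longrightarrow> cg_gamma A b x0 i > 0" using cg_pos(2)[OF posdef] n_def by blast
  have np: "\<And>i. i < n \<Longrightarrow> norm (cg_r A b x0 i) > 0" using cg_pos(1)[OF posdef] n_def by blast
  define w where "w i = inverse ((norm (cg_r A b x0 i))^2)" for i
  define F where "F k = (\<Sum>j<k. w j * (\<Sum>i=j..<k. cg_psi A b x0 i)^2)" for k
  have P1: "cg_xi A b x0 k = F k" if "1 \<le> k" "k \<le> n" for k
    unfolding F_def w_def by (rule xi_formula) (use that gp np in auto)
  have P0: "cg_xi A b x0 k = F k" if "k \<le> n" for k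
  proof (cases "k = 0")
    case True then show ?thesis by (simp add: cg_xi_def F_def)
  next
    case False then show ?thesis using P1 that by simp
  qed
  have TH: "cg_theta A b x0 m = (\<Sum>i<m. w i * (\<Sum>l=i..<m. cg_psi A b x0 l))" if "m \<le> n" for m
    using theta_closed[OF np that] theta_swap unfolding w_def by metis
  have P2: "cg_xi A b x0 (k + 1) =
              cg_xi A b x0 k + cg_psi A b x0 k * (cg_theta A b x0 (k + 1) + cg_theta A b x0 k)"
    if "k + 1 \<le> n" for k
  proof -
    have "cg_xi A b x0 (k + 1) = F (Suc k)" using P0 that by simp
    also have "\<dots> = F k + cg_psi A b x0 k * ((\<Sum>i<Suc k. w i * (\<Sum>l=i..<Suc k. cg_psi A b x0 l))
                  + (\<Sum>i<k. w i * (\<Sum>l=i..<k. cg_psi A b x0 l)))"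
      unfolding F_def by (rule xi_step)
    also have "\<dots> = F k + cg_psi A b x0 k * (cg_theta A b x0 (Suc k) + cg_theta A b x0 k)"
    proof -
      have t1: "cg_theta A b x0 (Suc k) = (\<Sum>i<Suc k. w i * (\<Sum>l=i..<Suc k. cg_psi A b x0 l))"
        by (rule TH) (use that in simp)
      have t2: "cg_theta A b x0 k = (\<Sum>i<k. w i * (\<Sum>l=i..<k. cg_psi A b x0 l))"
        by (rule TH) (use that in simp)
      show ?thesis unfolding t1 t2 ..
    qed
    also have "\<dots> = cg_xi A b x0 k + cg_psi A b x0 k * (cg_theta A b x0 (k + 1) + cg_theta A b x0 k)"
      using P0 that by simp
    finally show ?thesis .
  qed
  show ?thesis using P1 P2 unfolding F_def w_def by blast
qed

end
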